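(* Let $\mathcal{M}\subset\mathbb{R}^n$ be a locally symmetric $C^2$ submanifold, $\sigma\in\Sigma^n$ and $\bar x\in\mathcal{M}\cap\Delta(\sigma)$. Then there exists $\delta>0$ such that for every $x\in\mathcal{M}\cap B(\bar x,\delta)$ there is $\sigma'\in\Sigma^n$ with $P(\sigma')$ refining $P(\sigma)$ and $x,\bar\pi_T(x)\in\Delta(\sigma')$.
   Context: $\Sigma^n$ permutations of $\mathbb{N}_n$ acting by $(\sigma x)_i=x_{\sigma^{-1}(i)}$; $P(\sigma)$ the partition into orbits of $\sigma$; $P(x)$ partition in which $i,j$ lie in the same set iff $x_i=x_j$; $\Delta(\sigma)=\{x:P(x)=P(\sigma)\}$; a partition $P'$ refines $P$ if every set of $P$ is a union of sets of $P'$. $\mathbb{R}^n_\ge=\{x:x_1\ge\cdots\ge x_n\}$; $B$ open ball. A set $S$ is locally symmetric if $S\cap\mathbb{R}^n_\ge\ne\emptyset$ and each $x\in S$ has $\delta>0$ with $\sigma(S\cap B(x,\delta))=S\cap B(x,\delta)$ for all $y\in S\cap B(x,\delta)$, all $\sigma$ with $\sigma y=y$; a locally symmetric $C^2$ submanifold is a connected $C^2$ submanifold without boundary that is locally symmetric. $\bar\pi_T$ is the orthogonal projection onto the affine space $\bar x+T_{\mathcal{M}}(\bar x)$. *)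

theory Defs
  imports "HOL-Analysis.Analysis"
begin

text \<open>Vectors in R^n are modelled as real^'n, where the finite index type 'n
carries a linear order playing the role of the order 1 < 2 < ... < n.\<close>

definition perm_act :: "('n::finite \<Rightarrow> 'n) \<Rightarrow> real^'n \<Rightarrow> real^'n" where
  "perm_act \<sigma> x = (\<chi> i. x $ (inv \<sigma> i))"

definition perm_partition :: "('n::finite \<Rightarrow> 'n) \<Rightarrow> 'n set set" where
  "perm_partition \<sigma> = {{j. \<exists>k::nat. (\<sigma> ^^ k) i = j} | i. True}"

definition vec_partition :: "real^'n::finite \<Rightarrow> 'n set set" where
  "vec_partition x = {{j. x $ j = x $ i} | i. True}"

definition Delta :: "('n::finite \<Rightarrow> 'n) \<Rightarrow> (real^'n) set" where
  "Delta \<sigma> = {x. vec_partition x = perm_partition \<sigma>}"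

definition refines :: "'a set set \<Rightarrow> 'a set set \<Rightarrow> bool" where
  "refines P' P \<longleftrightarrow> (\<forall>A\<in>P. \<exists>S. S \<subseteq> P' \<and> A = \<Union>S)"

definition ordered_cone :: "(real^'n::{finite,linorder}) set" where
  "ordered_cone = {x. \<forall>i j. i \<le> j \<longrightarrow> x $ j \<le> x $ i}"

definition locally_symmetric :: "(real^'n::{finite,linorder}) set \<Rightarrow> bool" where
  "locally_symmetric S \<longleftrightarrow>
     S \<inter> ordered_cone \<noteq> {} \<and>
     (\<forall>x\<in>S. \<exists>\<delta>>0. \<forall>y\<in>S \<inter> ball x \<delta>. \<forall>\<sigma>.
        \<sigma> permutes (UNIV::'n set) \<and> perm_act \<sigma> y = y \<longrightarrow>
        perm_act \<sigma> ` (S \<inter> ball x \<delta>) = S \<inter> ball x \<delta>)"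

definition C2_on :: "'a::euclidean_space set \<Rightarrow> ('a \<Rightarrow> 'b::euclidean_space) \<Rightarrow> bool" where
  "C2_on U f \<longleftrightarrow> (\<exists>f' f''. \<forall>x\<in>U.
      (f has_derivative blinfun_apply (f' x)) (at x) \<and>
      (f' has_derivative blinfun_apply (f'' x)) (at x) \<and>
      continuous_on U f'')"

definition C2_submanifold :: "'a::euclidean_space set \<Rightarrow> bool" where
  "C2_submanifold M \<longleftrightarrow> (\<forall>x\<in>M. \<exists>U V (\<phi>::'a \<Rightarrow> 'a) \<psi> L.
      open U \<and> x \<in> U \<and> open V \<and> C2_on U \<phi> \<and> C2_on V \<psi> \<and> \<phi> ` U = V \<and>
      (\<forall>y\<in>U. \<psi> (\<phi> y) = y) \<and> (\<forall>z\<in>V. \<phi> (\<psi> z) = z) \<and>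
      subspace L \<and> \<phi> ` (M \<inter> U) = V \<inter> L)"

definition locally_symmetric_C2_submanifold :: "(real^'n::{finite,linorder}) set \<Rightarrow> bool" where
  "locally_symmetric_C2_submanifold M \<longleftrightarrow>
     connected M \<and> C2_submanifold M \<and> locally_symmetric M"

definition tangent_space :: "'a::euclidean_space set \<Rightarrow> 'a \<Rightarrow> 'a set" where
  "tangent_space M x = {v. \<exists>\<gamma> e. e > 0 \<and> \<gamma> ` {-e<..<e} \<subseteq> M \<and> \<gamma> 0 = x \<and>
      (\<gamma> has_vector_derivative v) (at 0)}"

definition proj_tangent :: "'a::euclidean_space set \<Rightarrow> 'a \<Rightarrow> 'a \<Rightarrow> 'a" where
  "proj_tangent M xbar x = closest_point ((\<lambda>v. xbar + v) ` tangent_space M xbar) x"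

end

theory Submission
  imports Defs
begin


definition nxt :: "('n::{finite,linorder} \<Rightarrow> 'b) \<Rightarrow> 'n \<Rightarrow> 'n" where
  "nxt f i = (if \<exists>k. f k = f i \<and> k > i then Min {k. f k = f i \<and> k > i} else Min {k. f k = f i})"

lemma nxt_same: "f (nxt f i) = f i"
proof (cases "\<exists>k. f k = f i \<and> k > i")
  case True
  have "Min {k. f k = f i \<and> k > i} \<in> {k. f k = f i \<and> k > i}"
    by (rule Min_in) (use True in auto)
  then show ?thesis using True by (simp add: nxt_def)
next
  case False
  have "Min {k. f k = f i} \<in> {k. f k = f i}"
    by (rule Min_in) auto
  then show ?thesis using False by (auto simp: nxt_def)
qed

lemma nxt_pow_same: "f ((nxt f ^^ m) i) = f i"
  by (induction m) (auto simp: nxt_same)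

lemma reach_up:
  fixes f :: "'n::{finite,linorder} \<Rightarrow> 'b"
  shows "f j = f i \<Longrightarrow> i \<le> j \<Longrightarrow> \<exists>m. (nxt f ^^ m) i = j"
proof (induction "card {k. f k = f i \<and> i < k \<and> k \<le> j}" arbitrary: i rule: less_induct)
  case less
  show ?case
  proof (cases "i = j")
    case True then show ?thesis by (intro exI[of _ 0]) auto
  next
    case False
    then have ij: "i < j" using less.prems by auto
    have ex: "\<exists>k. f k = f i \<and> k > i" using ij less.prems by auto
    define s where "s = Min {k. f k = f i \<and> k > i}"
    have s_in: "s \<in> {k. f k = f i \<and> k > i}" unfolding s_def by (rule Min_in) (use ex in auto)
    have sj: "s \<le> j" unfolding s_def by (rule Min_le) (use ij less.prems in auto)
    have ns: "nxt f i = s" using ex by (simp add: nxt_def s_def)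
    have sub: "{k. f k = f s \<and> s < k \<and> k \<le> j} \<subset> {k. f k = f i \<and> i < k \<and> k \<le> j}"
      using s_in sj by auto
    have "card {k. f k = f s \<and> s < k \<and> k \<le> j} < card {k. f k = f i \<and> i < k \<and> k \<le> j}"
      by (rule psubset_card_mono) (use sub in auto)
    then obtain m where "(nxt f ^^ m) s = j"
      using less.hyps[of s] s_in sj less.prems by auto
    then have "(nxt f ^^ Suc m) i = j" by (simp add: funpow_Suc_right ns del: funpow.simps)
    then show ?thesis by blast
  qed
qed

lemma reach_all:
  fixes f :: "'n::{finite,linorder} \<Rightarrow> 'b"
  assumes "f j = f i"
  shows "\<exists>m. (nxt f ^^ m) i = j"
proof -
  define C where "C = {k. f k = f i}"
  have fin: "finite C" "C \<noteq> {}" unfolding C_def by auto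
  define Mx where "Mx = Max C"
  define Mn where "Mn = Min C"
  have MxC: "Mx \<in> C" unfolding Mx_def using fin by simp
  have MnC: "Mn \<in> C" unfolding Mn_def using fin by simp
  have "i \<le> Mx" unfolding Mx_def using fin by (intro Max_ge) (auto simp: C_def)
  then obtain m1 where m1: "(nxt f ^^ m1) i = Mx" using reach_up[where j=Mx and i=i and f=f] MxC by (auto simp: C_def)
  have noex: "\<not> (\<exists>k. f k = f Mx \<and> k > Mx)"
  proof
    assume "\<exists>k. f k = f Mx \<and> k > Mx"
    then obtain k where "f k = f Mx" "k > Mx" by auto
    then have "k \<in> C" using MxC by (auto simp: C_def)
    then have "k \<le> Mx" unfolding Mx_def using fin by auto
    with \<open>k > Mx\<close> show False by simp
  qed
  have CMx: "{k. f k = f Mx} = C" using MxC by (auto simp: C_def)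
  have n1: "nxt f Mx = Mn" using noex unfolding nxt_def CMx Mn_def by auto
  have "Mn \<le> j" unfolding Mn_def using fin assms by (intro Min_le) (auto simp: C_def)
  then obtain m2 where m2: "(nxt f ^^ m2) Mn = j" using reach_up[where j=j and i=Mn and f=f] MnC assms by (auto simp: C_def)
  have "(nxt f ^^ (m2 + 1 + m1)) i = j" unfolding funpow_add by (simp add: m1 n1 m2)
  then show ?thesis by blast
qed

lemma nxt_permutes: "nxt (f::'n::{finite,linorder} \<Rightarrow> 'b) permutes UNIV"
proof -
  have surj: "surj (nxt f)"
  proof -
    { fix j :: 'n
      obtain m where "(nxt f ^^ m) (nxt f j) = j" using reach_all[where f=f and j=j and i="nxt f j"] nxt_same[of f j] by auto
      then have "j = nxt f ((nxt f ^^ m) j)" by (metis funpow_swap1)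
      then have "j \<in> range (nxt f)" by blast }
    then show ?thesis by auto
  qed
  then have "inj (nxt f)" using finite_surj_inj[of UNIV "nxt f"] by auto
  then have "bij (nxt f)" using surj by (simp add: bij_def)
  then show ?thesis using bij_imp_permutes[of "nxt f" UNIV] by auto
qed

lemma perm_partition_nxt: "perm_partition (nxt (\<lambda>i. x $ i)) = vec_partition (x::real^'n::{finite,linorder})"
proof -
  have "{j. \<exists>k::nat. (nxt (\<lambda>i. x $ i) ^^ k) i = j} = {j. x $ j = x $ i}" for i
  proof (rule set_eqI, rule iffI)
    fix j assume "j \<in> {j. \<exists>k::nat. (nxt (\<lambda>i. x $ i) ^^ k) i = j}"
    then obtain k where "(nxt (\<lambda>i. x $ i) ^^ k) i = j" by auto
    then show "j \<in> {j. x $ j = x $ i}" using nxt_pow_same[of "\<lambda>i. x $ i" k i] by auto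
  next
    fix j assume "j \<in> {j. x $ j = x $ i}"
    then show "j \<in> {j. \<exists>k::nat. (nxt (\<lambda>i. x $ i) ^^ k) i = j}"
      using reach_all[where f="\<lambda>i. x $ i" and j=j and i=i] by auto
  qed
  then show ?thesis unfolding perm_partition_def vec_partition_def by simp
qed

lemma refines_vec:
  assumes "\<And>i j. x $ i = x $ j \<Longrightarrow> y $ i = y $ j"
  shows "refines (vec_partition x) (vec_partition (y::real^'n::finite))"
  unfolding refines_def
proof
  fix A assume "A \<in> vec_partition y"
  then obtain i where A: "A = {j. y $ j = y $ i}" by (auto simp: vec_partition_def)
  define S where "S = {{k. x $ k = x $ j} | j. y $ j = y $ i}"
  have "S \<subseteq> vec_partition x" by (auto simp: S_def vec_partition_def)
  moreover have "A = \<Union>S"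
  proof safe
    fix j assume "j \<in> A" then show "j \<in> \<Union>S" by (auto simp: S_def A)
  next
    fix j B assume "j \<in> B" "B \<in> S" then show "j \<in> A"
      by (auto simp: S_def A dest: assms)
  qed
  ultimately show "\<exists>S. S \<subseteq> vec_partition x \<and> A = \<Union>S" by blast
qed

lemma vec_partition_eq:
  assumes "\<And>i j. x $ i = x $ j \<longleftrightarrow> y $ i = y $ j"
  shows "vec_partition x = vec_partition (y::real^'n::finite)"
proof -
  have "{j. x $ j = x $ i} = {j. y $ j = y $ i}" for i using assms by auto
  then show ?thesis unfolding vec_partition_def by simp
qed



lemma perm_act_apply: "perm_act \<sigma> x $ k = x $ inv \<sigma> k"
  by (simp add: perm_act_def)

lemma linear_perm_act: "linear (perm_act \<sigma>)"
  by (rule linearI) (simp_all add: vec_eq_iff perm_act_apply)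

lemma bounded_linear_perm_act: "bounded_linear (perm_act \<sigma>)"
  using linear_perm_act linear_conv_bounded_linear by blast

lemma norm_perm_act:
  assumes "\<sigma> permutes UNIV"
  shows "norm (perm_act \<sigma> x) = norm x"
proof -
  have p: "inv \<sigma> permutes UNIV" using assms by (rule permutes_inv)
  have "(\<Sum>i\<in>UNIV. (norm (x $ i))\<^sup>2) = (\<Sum>i\<in>UNIV. (norm (x $ inv \<sigma> i))\<^sup>2)"
    using sum.permute[OF p, of "\<lambda>i. (norm (x $ i))\<^sup>2"] by (simp add: o_def)
  then show ?thesis by (simp add: norm_vec_def L2_set_def perm_act_apply)
qed

lemma perm_act_transpose_apply: "perm_act (Transposition.transpose i j) x $ k = x $ Transposition.transpose i j k"
  by (simp add: perm_act_apply)

lemma perm_act_transpose_invol: "perm_act (Transposition.transpose i j) (perm_act (Transposition.transpose i j) x) = x"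
  by (simp add: vec_eq_iff perm_act_transpose_apply)

lemma perm_act_transpose_fix: "perm_act (Transposition.transpose i j) x = x \<longleftrightarrow> x $ i = x $ j"
proof
  assume "perm_act (Transposition.transpose i j) x = x"
  then have "perm_act (Transposition.transpose i j) x $ i = x $ i" by simp
  then show "x $ i = x $ j" by (simp add: perm_act_transpose_apply)
next
  assume "x $ i = x $ j"
  then show "perm_act (Transposition.transpose i j) x = x"
    by (auto simp: vec_eq_iff perm_act_transpose_apply Transposition.transpose_def)
qed

lemma transpose_permutes_UNIV: "Transposition.transpose i j permutes UNIV"
  by (rule permutes_swap_id) auto

lemma cp_closed: "subspace T \<Longrightarrow> closed ((\<lambda>v. xbar + v) ` (T::'a::euclidean_space set))"
  using closed_subspace closed_translation by blast

lemma cp_convex: "subspace T \<Longrightarrow> convex ((\<lambda>v. xbar + v) ` (T::'a::euclidean_space set))"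
  using subspace_imp_convex convex_translation by blast

lemma cp_orth:
  fixes T :: "'a::euclidean_space set"
  assumes T: "subspace T" and t: "t \<in> T"
  shows "inner (x - closest_point ((\<lambda>v. xbar + v) ` T) x) t = 0"
proof -
  let ?S = "(\<lambda>v. xbar + v) ` T"
  let ?c = "closest_point ?S x"
  have ne: "?S \<noteq> {}" using subspace_0[OF T] by auto
  have "?c \<in> ?S" using closest_point_in_set[OF cp_closed[OF T] ne] .
  then obtain v where v: "v \<in> T" "?c = xbar + v" by auto
  have "?c + t \<in> ?S" using v t T by (auto intro!: image_eqI[of _ _ "v + t"] subspace_add simp: v)
  from closest_point_dot[OF cp_convex[OF T] cp_closed[OF T] this, where a=x]
  have 1: "inner (x - ?c) t \<le> 0" by simp
  have "?c - t \<in> ?S" using v t T by (auto intro!: image_eqI[of _ _ "v - t"] subspace_diff simp: v)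
  from closest_point_dot[OF cp_convex[OF T] cp_closed[OF T] this, where a=x]
  have 2: "inner (x - ?c) (- t) \<le> 0" by simp
  show ?thesis using 1 2 by (simp add: inner_minus_right)
qed

lemma cp_comm:
  fixes T :: "'a::euclidean_space set"
  assumes T: "subspace T" and A: "linear A" and An: "\<And>x. norm (A x) = norm x"
    and Ax: "A xbar = xbar" and AT: "\<And>t. t \<in> T \<Longrightarrow> A t \<in> T" and AA: "\<And>x. A (A x) = x"
  shows "closest_point ((\<lambda>v. xbar + v) ` T) (A x) = A (closest_point ((\<lambda>v. xbar + v) ` T) x)"
proof -
  let ?S = "(\<lambda>v. xbar + v) ` T"
  let ?c = "closest_point ?S x"
  have ne: "?S \<noteq> {}" using subspace_0[OF T] by auto
  have AS: "A y \<in> ?S" if "y \<in> ?S" for y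
  proof -
    from that obtain v where "v \<in> T" "y = xbar + v" by auto
    then have "A y = xbar + A v" using Ax linear_add[OF A] by simp
    then show ?thesis using AT \<open>v \<in> T\<close> by auto
  qed
  have cS: "?c \<in> ?S" using closest_point_in_set[OF cp_closed[OF T] ne] .
  have dA: "dist (A a) (A b) = dist a b" for a b
    by (simp add: dist_norm linear_diff[OF A, symmetric] An)
  show ?thesis
  proof (rule closest_point_unique[symmetric, OF cp_convex[OF T] cp_closed[OF T] AS[OF cS]], rule ballI)
    fix z assume z: "z \<in> ?S"
    have "dist (A x) (A ?c) = dist x ?c" by (rule dA)
    also have "\<dots> \<le> dist x (A z)" by (rule closest_point_le[OF cp_closed[OF T] AS[OF z]])
    also have "\<dots> = dist (A x) (A (A z))" by (rule dA[symmetric])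
    also have "\<dots> = dist (A x) z" by (simp add: AA)
    finally show "dist (A x) (A ?c) \<le> dist (A x) z" .
  qed
qed

lemma cp_lip:
  fixes T :: "'a::euclidean_space set"
  assumes T: "subspace T"
  shows "dist (closest_point ((\<lambda>v. xbar + v) ` T) x) xbar \<le> dist x xbar"
proof -
  have ne: "(\<lambda>v. xbar + v) ` T \<noteq> {}" using subspace_0[OF T] by auto
  have "xbar \<in> (\<lambda>v. xbar + v) ` T" using subspace_0[OF T] by (auto intro!: image_eqI[of _ _ 0])
  then have "closest_point ((\<lambda>v. xbar + v) ` T) xbar = xbar" by (rule closest_point_self)
  then show ?thesis using closest_point_lipschitz[OF cp_convex[OF T] cp_closed[OF T] ne, of x xbar] by simp
qed



lemma vecderiv_quotient:
  fixes \<gamma> :: "real \<Rightarrow> 'a::real_normed_vector"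
  assumes "(\<gamma> has_vector_derivative v) (at 0)"
  shows "((\<lambda>t. (1/t) *\<^sub>R (\<gamma> t - \<gamma> 0)) \<longlongrightarrow> v) (at 0)"
proof -
  have lim: "((\<lambda>y. norm (\<gamma> y - \<gamma> 0 - (y - 0) *\<^sub>R v) / norm (y - 0)) \<longlongrightarrow> 0) (at 0)"
    using assms[unfolded has_vector_derivative_def has_derivative_iff_norm] by (rule conjunct2)
  have ev: "eventually (\<lambda>y. y \<noteq> (0::real)) (at 0)" by (simp add: eventually_at_filter)
  have eq: "norm (\<gamma> y - \<gamma> 0 - (y - 0) *\<^sub>R v) / norm (y - 0) = norm ((1/y) *\<^sub>R (\<gamma> y - \<gamma> 0) - v)"
    if "y \<noteq> 0" for y
  proof -
    have "(1/y) *\<^sub>R (\<gamma> y - \<gamma> 0) - v = (1/y) *\<^sub>R (\<gamma> y - \<gamma> 0 - y *\<^sub>R v)"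
      using that by (simp add: scaleR_diff_right)
    then have "norm ((1/y) *\<^sub>R (\<gamma> y - \<gamma> 0) - v) = norm (\<gamma> y - \<gamma> 0 - y *\<^sub>R v) / \<bar>y\<bar>"
      by (simp only: norm_scaleR abs_divide abs_one divide_inverse mult_1_left mult.commute abs_inverse)
    then show ?thesis unfolding diff_zero real_norm_def by (rule sym)
  qed
  have "((\<lambda>y. norm ((1/y) *\<^sub>R (\<gamma> y - \<gamma> 0) - v)) \<longlongrightarrow> 0) (at 0)"
  proof (rule Lim_transform_eventually[OF lim])
    show "\<forall>\<^sub>F y in at 0. norm (\<gamma> y - \<gamma> 0 - (y - 0) *\<^sub>R v) / norm (y - 0) = norm ((1/y) *\<^sub>R (\<gamma> y - \<gamma> 0) - v)"
      using ev by (rule eventually_mono) (rule eq)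
  qed
  then have "((\<lambda>y. (1/y) *\<^sub>R (\<gamma> y - \<gamma> 0) - v) \<longlongrightarrow> 0) (at 0)"
    by (simp only: tendsto_norm_zero_iff)
  then show ?thesis by (rule LIM_zero_cancel)
qed

lemma chain_vec:
  assumes "(\<gamma> has_vector_derivative v) (at 0)" "(f has_derivative f') (at (\<gamma> 0))"
  shows "((\<lambda>t. f (\<gamma> t)) has_vector_derivative f' v) (at 0)"
proof -
  have "((f \<circ> \<gamma>) has_derivative (f' \<circ> (\<lambda>t. t *\<^sub>R v))) (at 0)"
    using assms unfolding has_vector_derivative_def by (rule diff_chain_at)
  moreover have "f' \<circ> (\<lambda>t. t *\<^sub>R v) = (\<lambda>t. t *\<^sub>R f' v)"
    using linear_scale[OF bounded_linear.linear[OF has_derivative_bounded_linear[OF assms(2)]]]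
    by (simp add: fun_eq_iff)
  ultimately show ?thesis unfolding has_vector_derivative_def by (simp add: o_def)
qed

lemma tangent_char:
  fixes M :: "'a::euclidean_space set" and \<phi> \<psi> :: "'a \<Rightarrow> 'a"
  assumes U: "open U" "xbar \<in> U" and xM: "xbar \<in> M" and V: "open V"
    and d\<phi>: "\<And>y. y \<in> U \<Longrightarrow> (\<phi> has_derivative \<phi>' y) (at y)"
    and d\<psi>: "\<And>z. z \<in> V \<Longrightarrow> (\<psi> has_derivative \<psi>' z) (at z)"
    and \<psi>\<phi>: "\<And>y. y \<in> U \<Longrightarrow> \<psi> (\<phi> y) = y"
    and L: "subspace L" and hML: "\<phi> ` (M \<inter> U) = V \<inter> L"
  shows "tangent_space M xbar = \<psi>' (\<phi> xbar) ` L"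
proof
  define a0 where "a0 = \<phi> xbar"
  have a0VL: "a0 \<in> V \<inter> L" using hML xM U unfolding a0_def by blast
  have \<psi>a0: "\<psi> a0 = xbar" using \<psi>\<phi> U unfolding a0_def by simp
  show "\<psi>' (\<phi> xbar) ` L \<subseteq> tangent_space M xbar"
  proof
    fix u assume "u \<in> \<psi>' (\<phi> xbar) ` L"
    then obtain w where w: "w \<in> L" "u = \<psi>' a0 w" unfolding a0_def by auto
    obtain \<epsilon> where \<epsilon>: "\<epsilon> > 0" "ball a0 \<epsilon> \<subseteq> V" using V a0VL open_contains_ball by blast
    define e where "e = \<epsilon> / (norm w + 1)"
    have nw: "norm w + 1 > 0" by (simp add: add_nonneg_pos)
    have e: "e > 0" using \<epsilon> nw unfolding e_def by (simp add: divide_pos_pos)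
    define \<gamma> where "\<gamma> t = \<psi> (a0 + t *\<^sub>R w)" for t
    have "\<gamma> t \<in> M" if t: "t \<in> {-e<..<e}" for t
    proof -
      have "norm (t *\<^sub>R w) = \<bar>t\<bar> * norm w" by simp
      also have "\<dots> \<le> \<bar>t\<bar> * (norm w + 1)" by (simp add: mult_left_mono)
      also have "\<dots> < e * (norm w + 1)" using t by (intro mult_strict_right_mono) (use nw in auto)
      also have "\<dots> = \<epsilon>" using nw by (simp add: e_def)
      finally have "a0 + t *\<^sub>R w \<in> ball a0 \<epsilon>" by (simp add: dist_norm)
      then have "a0 + t *\<^sub>R w \<in> V \<inter> L"
        using \<epsilon> a0VL w L by (auto intro: subspace_add subspace_scale)
      then obtain m where m: "m \<in> M \<inter> U" "\<phi> m = a0 + t *\<^sub>R w" using hML by (metis imageE)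
      then show ?thesis using \<psi>\<phi> by (simp add: \<gamma>_def) (metis IntD1 IntD2)
    qed
    then have "\<gamma> ` {-e<..<e} \<subseteq> M" by auto
    moreover have "\<gamma> 0 = xbar" by (simp add: \<gamma>_def \<psi>a0)
    moreover have "(\<gamma> has_vector_derivative u) (at 0)"
    proof -
      have "((\<lambda>t. a0 + t *\<^sub>R w) has_vector_derivative w) (at 0)"
        by (auto intro!: derivative_eq_intros)
      moreover have "(\<psi> has_derivative \<psi>' a0) (at ((\<lambda>t. a0 + t *\<^sub>R w) 0))"
        using d\<psi> a0VL by simp
      ultimately show ?thesis using chain_vec w(2) unfolding \<gamma>_def by blast
    qed
    ultimately show "u \<in> tangent_space M xbar" unfolding tangent_space_def using e by blast
  qed
  show "tangent_space M xbar \<subseteq> \<psi>' (\<phi> xbar) ` L"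
  proof
    fix v assume "v \<in> tangent_space M xbar"
    then obtain \<gamma> e where \<gamma>: "e > 0" "\<gamma> ` {-e<..<e} \<subseteq> M" "\<gamma> 0 = xbar"
      "(\<gamma> has_vector_derivative v) (at 0)" unfolding tangent_space_def by blast
    have cont: "continuous (at 0) \<gamma>" using \<gamma>(4) by (rule has_vector_derivative_continuous)
    have evU: "eventually (\<lambda>t. \<gamma> t \<in> U) (at 0)"
    proof -
      have "(\<gamma> \<longlongrightarrow> \<gamma> 0) (at 0)" using cont by (simp add: continuous_at)
      then show ?thesis using U \<gamma>(3) by (auto dest: topological_tendstoD)
    qed
    have eve: "eventually (\<lambda>t. t \<in> {-e<..<e}) (at (0::real))"
      unfolding eventually_at using \<gamma>(1) by (auto intro!: exI[of _ e] simp: dist_real_def)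
    have dphi: "((\<lambda>t. \<phi> (\<gamma> t)) has_vector_derivative \<phi>' xbar v) (at 0)"
      using chain_vec[OF \<gamma>(4), of \<phi> "\<phi>' xbar"] d\<phi>[OF U(2)] \<gamma>(3) by simp
    have q: "((\<lambda>t. (1/t) *\<^sub>R (\<phi> (\<gamma> t) - \<phi> (\<gamma> 0))) \<longlongrightarrow> \<phi>' xbar v) (at 0)"
      using vecderiv_quotient[OF dphi] .
    have evL: "eventually (\<lambda>t. (1/t) *\<^sub>R (\<phi> (\<gamma> t) - \<phi> (\<gamma> 0)) \<in> L) (at 0)"
      using evU eve
    proof eventually_elim
      case (elim t)
      then have "\<gamma> t \<in> M \<inter> U" using \<gamma>(2) by auto
      then have "\<phi> (\<gamma> t) \<in> L" using hML by blast
      moreover have "\<phi> (\<gamma> 0) \<in> L" using a0VL \<gamma>(3) by (simp add: a0_def)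
      ultimately show ?case using L by (intro subspace_scale subspace_diff) auto
    qed
    have v'L: "\<phi>' xbar v \<in> L"
      by (rule Lim_in_closed_set[OF closed_subspace[OF L] evL _ q]) simp
    have "(\<psi> \<circ> \<phi> has_derivative \<psi>' a0 \<circ> \<phi>' xbar) (at xbar)"
      using d\<phi>[OF U(2)] d\<psi> a0VL by (intro diff_chain_at) (auto simp: a0_def)
    moreover have "(\<psi> \<circ> \<phi> has_derivative (\<lambda>x. x)) (at xbar)"
      by (rule has_derivative_transform_within_open[OF has_derivative_ident U]) (simp add: \<psi>\<phi>)
    ultimately have "\<psi>' a0 \<circ> \<phi>' xbar = (\<lambda>x. x)" by (rule has_derivative_unique)
    then have "v = \<psi>' a0 (\<phi>' xbar v)" by (metis o_apply)
    then show "v \<in> \<psi>' (\<phi> xbar) ` L" using v'L unfolding a0_def by blast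
  qed
qed



lemma tangent_invariant:
  fixes M :: "'a::euclidean_space set"
  assumes A: "bounded_linear A" and d1: "\<delta>1 > 0" and Ax: "A xbar = xbar"
    and AM: "\<And>y. y \<in> M \<inter> ball xbar \<delta>1 \<Longrightarrow> A y \<in> M"
    and v: "v \<in> tangent_space M xbar"
  shows "A v \<in> tangent_space M xbar"
proof -
  obtain \<gamma> e where \<gamma>: "e > 0" "\<gamma> ` {-e<..<e} \<subseteq> M" "\<gamma> 0 = xbar"
    "(\<gamma> has_vector_derivative v) (at 0)" using v unfolding tangent_space_def by blast
  have cont: "continuous (at 0) \<gamma>" using \<gamma>(4) by (rule has_vector_derivative_continuous)
  then obtain d where d: "d > 0" "\<And>t. dist t 0 < d \<Longrightarrow> dist (\<gamma> t) (\<gamma> 0) < \<delta>1"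
    unfolding continuous_at_eps_delta using d1 by blast
  define e2 where "e2 = min e d"
  have "(\<lambda>t. A (\<gamma> t)) ` {-e2<..<e2} \<subseteq> M"
  proof
    fix z assume "z \<in> (\<lambda>t. A (\<gamma> t)) ` {-e2<..<e2}"
    then obtain t where t: "t \<in> {-e2<..<e2}" "z = A (\<gamma> t)" by auto
    have "\<gamma> t \<in> M" using t \<gamma>(2) by (auto simp: e2_def)
    moreover have "dist (\<gamma> t) xbar < \<delta>1" using d(2)[of t] t \<gamma>(3) by (auto simp: e2_def dist_real_def)
    ultimately show "z \<in> M" using AM t(2) by (auto simp: dist_commute)
  qed
  moreover have "(\<lambda>t. A (\<gamma> t)) 0 = xbar" using \<gamma>(3) Ax by simp
  moreover have "((\<lambda>t. A (\<gamma> t)) has_vector_derivative A v) (at 0)"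
    using chain_vec[OF \<gamma>(4), of A A] bounded_linear_imp_has_derivative[OF A] by simp
  moreover have "e2 > 0" using \<gamma>(1) d(1) by (simp add: e2_def)
  ultimately show ?thesis unfolding tangent_space_def by blast
qed

lemma secant:
  fixes M :: "'a::euclidean_space set" and \<phi> \<psi> :: "'a \<Rightarrow> 'a"
  assumes U: "open U" "xbar \<in> U" and V: "open V" and a0V: "\<phi> xbar \<in> V"
    and d\<phi>: "\<And>y. y \<in> U \<Longrightarrow> (\<phi> has_derivative blinfun_apply (\<Phi> y)) (at y)"
    and c\<Phi>: "continuous_on U \<Phi>"
    and d\<psi>: "\<And>z. z \<in> V \<Longrightarrow> (\<psi> has_derivative blinfun_apply (\<Psi> z)) (at z)"
    and c\<Psi>: "continuous_on V \<Psi>"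
    and \<psi>\<phi>: "\<And>y. y \<in> U \<Longrightarrow> \<psi> (\<phi> y) = y"
    and hML: "\<phi> ` (M \<inter> U) = V \<inter> L" and L: "subspace L"
  shows "\<exists>r>0. \<forall>x\<in>M \<inter> ball xbar r. \<forall>y\<in>M \<inter> ball xbar r.
            (\<forall>w\<in>L. inner (x - y) (\<Psi> (\<phi> xbar) w) = 0) \<longrightarrow> x = y"
proof -
  define a0 where "a0 = \<phi> xbar"
  define B where "B = norm (\<Phi> xbar) + 1"
  have B: "B > 0" by (simp add: B_def add_nonneg_pos)
  define \<epsilon> where "\<epsilon> = 1 / (2 * B)"
  have \<epsilon>: "\<epsilon> > 0" using B by (simp add: \<epsilon>_def)
  obtain \<rho>1 where \<rho>1: "\<rho>1 > 0" "\<And>a. a \<in> V \<Longrightarrow> dist a a0 < \<rho>1 \<Longrightarrow> dist (\<Psi> a) (\<Psi> a0) < \<epsilon>"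
    using c\<Psi> a0V \<epsilon> unfolding continuous_on_iff a0_def by metis
  obtain \<rho>2 where \<rho>2: "\<rho>2 > 0" "ball a0 \<rho>2 \<subseteq> V" using V a0V open_contains_ball unfolding a0_def by blast
  define \<rho> where "\<rho> = min \<rho>1 \<rho>2"
  have \<rho>: "\<rho> > 0" using \<rho>1 \<rho>2 by (simp add: \<rho>_def)
  have ballV: "ball a0 \<rho> \<subseteq> V" using \<rho>2 by (auto simp: \<rho>_def)
  have \<Psi>close: "norm (\<Psi> a - \<Psi> a0) \<le> \<epsilon>" if "a \<in> ball a0 \<rho>" for a
  proof -
    have "a \<in> V" "dist a a0 < \<rho>1" using that ballV by (auto simp: \<rho>_def dist_commute)
    then show ?thesis using \<rho>1(2)[of a] by (simp add: dist_norm)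
  qed
  obtain r1 where r1: "r1 > 0" "\<And>y. y \<in> U \<Longrightarrow> dist y xbar < r1 \<Longrightarrow> dist (\<Phi> y) (\<Phi> xbar) < 1"
    using c\<Phi> U(2) unfolding continuous_on_iff by (metis zero_less_one)
  obtain r2 where r2: "r2 > 0" "ball xbar r2 \<subseteq> U" using U open_contains_ball by blast
  define r where "r = min (min r1 r2) (\<rho> / B)"
  have r: "r > 0" using r1 r2 \<rho> B by (simp add: r_def)
  have ballU: "ball xbar r \<subseteq> U" using r2 by (auto simp: r_def)
  have \<Phi>bound: "onorm (blinfun_apply (\<Phi> y)) \<le> B" if "y \<in> ball xbar r" for y
  proof -
    have "dist (\<Phi> y) (\<Phi> xbar) < 1" using r1(2)[of y] that ballU by (auto simp: r_def dist_commute)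
    then have "norm (\<Phi> y) \<le> B" unfolding B_def dist_norm using norm_triangle_ineq2[of "\<Phi> y" "\<Phi> xbar"] by linarith
    then show ?thesis by (simp add: norm_blinfun.rep_eq)
  qed
  have lipphi: "norm (\<phi> x - \<phi> y) \<le> B * norm (x - y)" if "x \<in> ball xbar r" "y \<in> ball xbar r" for x y
  proof (rule differentiable_bound[OF convex_ball _ \<Phi>bound that])
    fix z assume "z \<in> ball xbar r"
    show "(\<phi> has_derivative blinfun_apply (\<Phi> z)) (at z within ball xbar r)"
      by (rule has_derivative_at_withinI, rule d\<phi>) (use ballU \<open>z \<in> ball xbar r\<close> in auto)
  qed
  have inball: "\<phi> y \<in> ball a0 \<rho>" if "y \<in> ball xbar r" for y
  proof -
    have "norm (\<phi> y - \<phi> xbar) \<le> B * norm (y - xbar)" using lipphi[OF that] r by simp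
    also have "\<dots> < B * (\<rho> / B)"
      using that B by (intro mult_strict_left_mono) (auto simp: r_def dist_norm norm_minus_commute)
    also have "\<dots> = \<rho>" using B by simp
    finally show ?thesis by (simp add: a0_def dist_norm norm_minus_commute)
  qed
  have lin: "norm (\<psi> b - \<psi> a - \<Psi> a0 (b - a)) \<le> norm (b - a) * \<epsilon>"
    if "a \<in> ball a0 \<rho>" "b \<in> ball a0 \<rho>" for a b
  proof (rule differentiable_bound_linearization[where S="ball a0 \<rho>" and f'="\<lambda>x. blinfun_apply (\<Psi> x)"])
    fix t :: real assume "t \<in> {0..1}"
    then show "a + t *\<^sub>R (b - a) \<in> ball a0 \<rho>"
      using convexD_alt[OF convex_ball that, of t] by (simp add: algebra_simps)
  next
    fix x assume "x \<in> ball a0 \<rho>"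
    show "(\<psi> has_derivative blinfun_apply (\<Psi> x)) (at x within ball a0 \<rho>)"
      by (rule has_derivative_at_withinI, rule d\<psi>) (use ballV \<open>x \<in> ball a0 \<rho>\<close> in auto)
  next
    fix x assume "x \<in> ball a0 \<rho>"
    then show "onorm (blinfun_apply (\<Psi> x) - blinfun_apply (\<Psi> a0)) \<le> \<epsilon>"
    proof -
      have "blinfun_apply (\<Psi> x) - blinfun_apply (\<Psi> a0) = blinfun_apply (\<Psi> x - \<Psi> a0)"
        by (simp add: fun_eq_iff blinfun.diff_left)
      then have "onorm (blinfun_apply (\<Psi> x) - blinfun_apply (\<Psi> a0)) = norm (\<Psi> x - \<Psi> a0)"
        by (simp add: norm_blinfun.rep_eq)
      then show ?thesis using \<Psi>close[OF \<open>x \<in> ball a0 \<rho>\<close>] by simp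
    qed
  next
    show "a0 \<in> ball a0 \<rho>" using \<rho> by simp
  qed
  show ?thesis
  proof (intro exI[of _ r] conjI r ballI impI)
    fix x y assume x: "x \<in> M \<inter> ball xbar r" and y: "y \<in> M \<inter> ball xbar r"
      and orth: "\<forall>w\<in>L. inner (x - y) (\<Psi> (\<phi> xbar) w) = 0"
    define a where "a = \<phi> x"
    define b where "b = \<phi> y"
    have aL: "a \<in> L" using x ballU hML unfolding a_def by blast
    have bL: "b \<in> L" using y ballU hML unfolding b_def by blast
    have ab: "a \<in> ball a0 \<rho>" "b \<in> ball a0 \<rho>" using inball x y by (auto simp: a_def b_def)
    have xa: "\<psi> a = x" using \<psi>\<phi> x ballU by (auto simp: a_def)
    have yb: "\<psi> b = y" using \<psi>\<phi> y ballU by (auto simp: b_def)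
    define t where "t = \<Psi> a0 (a - b)"
    define e where "e = (x - y) - t"
    have "norm e \<le> norm (a - b) * \<epsilon>" using lin[OF ab(2) ab(1)] by (simp add: e_def t_def xa yb)
    also have "\<dots> \<le> B * norm (x - y) * \<epsilon>"
      using lipphi[of x y] x y \<epsilon> by (intro mult_right_mono) (auto simp: a_def b_def)
    also have "\<dots> = norm (x - y) / 2" using B by (simp add: \<epsilon>_def)
    finally have ne: "norm e \<le> norm (x - y) / 2" .
    have "a - b \<in> L" using L aL bL by (rule subspace_diff)
    then have "inner (x - y) t = 0" using orth by (simp add: t_def a0_def)
    then have "inner (x - y) (x - y) = inner (x - y) e"
      by (simp add: e_def inner_diff_right)
    also have "\<dots> \<le> norm (x - y) * norm e" by (rule Cauchy_Schwarz_ineq2[THEN order_trans[OF abs_ge_self]])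
    also have "\<dots> \<le> norm (x - y) * (norm (x - y) / 2)" by (rule mult_left_mono[OF ne norm_ge_zero])
    finally have h: "inner (x - y) (x - y) \<le> norm (x - y) * (norm (x - y) / 2)" .
    have "inner (x - y) (x - y) = norm (x - y) * norm (x - y)"
      by (simp add: power2_norm_eq_inner[symmetric] power2_eq_square)
    with h have "norm (x - y) * norm (x - y) \<le> 0" by linarith
    then have "norm (x - y) = 0" by (simp add: mult_le_0_iff)
    then show "x = y" by simp
  qed
qed



lemma real_sep_aux:
  fixes a b c :: real
  assumes "\<bar>c - a\<bar> < \<bar>a - b\<bar> / 2" "\<bar>c - b\<bar> < \<bar>a - b\<bar> / 2"
  shows False
  using assms by (auto simp: abs_if split: if_splits)

lemma near_sep:
  fixes xbar :: "real^'n::finite"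
  shows "\<exists>d>0. \<forall>y. dist y xbar < d \<longrightarrow> (\<forall>i j. y $ i = y $ j \<longrightarrow> xbar $ i = xbar $ j)"
proof -
  have "eventually (\<lambda>y. y $ i = y $ j \<longrightarrow> xbar $ i = xbar $ j) (nhds xbar)" for i j
  proof (cases "xbar $ i = xbar $ j")
    case True then show ?thesis by simp
  next
    case False
    define d where "d = \<bar>xbar $ i - xbar $ j\<bar> / 2"
    have d: "d > 0" using False by (simp add: d_def)
    have "y $ i \<noteq> y $ j" if "dist y xbar < d" for y
    proof
      assume eq: "y $ i = y $ j"
      have "dist (y $ i) (xbar $ i) < d" using dist_vec_nth_le[where x=y and y=xbar and i=i] that by linarith
      moreover have "dist (y $ j) (xbar $ j) < d" using dist_vec_nth_le[where x=y and y=xbar and i=j] that by linarith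
      ultimately show False using eq unfolding d_def dist_real_def using real_sep_aux by metis
    qed
    then show ?thesis unfolding eventually_nhds_metric using d by blast
  qed
  then have "eventually (\<lambda>y. \<forall>i j. y $ i = y $ j \<longrightarrow> xbar $ i = xbar $ j) (nhds xbar)"
    by (intro eventually_all_finite) auto
  then show ?thesis unfolding eventually_nhds_metric by blast
qed

theorem proposition3p14:
  fixes M :: "(real^'n::{finite,linorder}) set"
    and \<sigma> :: "'n::{finite,linorder} \<Rightarrow> 'n" and xbar :: "real^('n::{finite,linorder})"
  assumes "locally_symmetric_C2_submanifold M"
    and "\<sigma> permutes (UNIV::('n::{finite,linorder}) set)"
    and "xbar \<in> M \<inter> Delta \<sigma>"
  shows "\<exists>\<delta>>0. \<forall>x\<in>M \<inter> ball xbar \<delta>. \<exists>\<sigma>'. \<sigma>' permutes (UNIV::('n::{finite,linorder}) set) \<and>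
           refines (perm_partition \<sigma>') (perm_partition \<sigma>) \<and>
           x \<in> Delta \<sigma>' \<and> proj_tangent M xbar x \<in> Delta \<sigma>'"
proof -
  have xM: "xbar \<in> M" and xD: "vec_partition xbar = perm_partition \<sigma>"
    using assms(3) by (auto simp: Delta_def)
  have C2: "C2_submanifold M" and LS: "locally_symmetric M"
    using assms(1) by (auto simp: locally_symmetric_C2_submanifold_def)
  have LS2: "\<forall>x\<in>M. \<exists>\<delta>>0. \<forall>y\<in>M \<inter> ball x \<delta>. \<forall>\<sigma>.
        \<sigma> permutes UNIV \<and> perm_act \<sigma> y = y \<longrightarrow>
        perm_act \<sigma> ` (M \<inter> ball x \<delta>) = M \<inter> ball x \<delta>"
    using LS unfolding locally_symmetric_def by (rule conjunct2)
  from bspec[OF LS2 xM] obtain \<delta>1 where \<delta>1: "\<delta>1 > 0" and sym0: "\<forall>y\<in>M \<inter> ball xbar \<delta>1. \<forall>\<tau>.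
        \<tau> permutes UNIV \<and> perm_act \<tau> y = y \<longrightarrow>
        perm_act \<tau> ` (M \<inter> ball xbar \<delta>1) = M \<inter> ball xbar \<delta>1"
    by blast
  have sym: "perm_act \<tau> ` (M \<inter> ball xbar \<delta>1) = M \<inter> ball xbar \<delta>1"
    if "y \<in> M \<inter> ball xbar \<delta>1" "\<tau> permutes UNIV" "perm_act \<tau> y = y" for y \<tau>
    using sym0 that by blast
  have "\<exists>U V (\<phi>::real^'n::{finite,linorder} \<Rightarrow> real^'n::{finite,linorder}) \<psi> L.
      open U \<and> xbar \<in> U \<and> open V \<and> C2_on U \<phi> \<and> C2_on V \<psi> \<and> \<phi> ` U = V \<and>
      (\<forall>y\<in>U. \<psi> (\<phi> y) = y) \<and> (\<forall>z\<in>V. \<phi> (\<psi> z) = z) \<and>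
      subspace L \<and> \<phi> ` (M \<inter> U) = V \<inter> L"
    using C2 xM unfolding C2_submanifold_def by (rule bspec)
  then obtain U V L and \<phi> \<psi> :: "real^'n::{finite,linorder} \<Rightarrow> real^'n::{finite,linorder}" where H:
      "open U \<and> xbar \<in> U \<and> open V \<and> C2_on U \<phi> \<and> C2_on V \<psi> \<and> \<phi> ` U = V \<and>
      (\<forall>y\<in>U. \<psi> (\<phi> y) = y) \<and> (\<forall>z\<in>V. \<phi> (\<psi> z) = z) \<and>
      subspace L \<and> \<phi> ` (M \<inter> U) = V \<inter> L"
    by (elim exE) (rule that, assumption)
  have U: "open U" "xbar \<in> U" and V: "open V" and C\<phi>: "C2_on U \<phi>"
    and C\<psi>: "C2_on V \<psi>" and \<phi>UV: "\<phi> ` U = V"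
    and L: "subspace L" and hML: "\<phi> ` (M \<inter> U) = V \<inter> L"
    using H by (simp_all only:)
  have \<psi>\<phi>: "\<And>y. y \<in> U \<Longrightarrow> \<psi> (\<phi> y) = y" using H by (simp only:)
  obtain \<Phi> \<Phi>2 where \<Phi>0: "\<forall>x\<in>U. (\<phi> has_derivative blinfun_apply (\<Phi> x)) (at x) \<and>
      (\<Phi> has_derivative blinfun_apply (\<Phi>2 x)) (at x) \<and> continuous_on U \<Phi>2"
    using C\<phi> unfolding C2_on_def by blast
  obtain \<Psi> \<Psi>2 where \<Psi>0: "\<forall>x\<in>V. (\<psi> has_derivative blinfun_apply (\<Psi> x)) (at x) \<and>
      (\<Psi> has_derivative blinfun_apply (\<Psi>2 x)) (at x) \<and> continuous_on V \<Psi>2"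
    using C\<psi> unfolding C2_on_def by blast
  have d\<Phi>: "(\<phi> has_derivative blinfun_apply (\<Phi> y)) (at y)" if "y \<in> U" for y
    using \<Phi>0 that by blast
  have d\<Psi>: "(\<psi> has_derivative blinfun_apply (\<Psi> y)) (at y)" if "y \<in> V" for y
    using \<Psi>0 that by blast
  have c\<Phi>: "continuous_on U \<Phi>"
  proof (rule continuous_at_imp_continuous_on, rule ballI)
    fix x assume "x \<in> U"
    then have "(\<Phi> has_derivative blinfun_apply (\<Phi>2 x)) (at x)" using \<Phi>0 by blast
    then show "isCont \<Phi> x" by (rule has_derivative_continuous)
  qed
  have c\<Psi>: "continuous_on V \<Psi>"
  proof (rule continuous_at_imp_continuous_on, rule ballI)
    fix x assume "x \<in> V"
    then have "(\<Psi> has_derivative blinfun_apply (\<Psi>2 x)) (at x)" using \<Psi>0 by blast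
    then show "isCont \<Psi> x" by (rule has_derivative_continuous)
  qed
  have a0V: "\<phi> xbar \<in> V" using \<phi>UV U by blast
  define T where "T = tangent_space M xbar"
  have Teq: "T = blinfun_apply (\<Psi> (\<phi> xbar)) ` L"
    unfolding T_def by (rule tangent_char[OF U xM V d\<Phi> d\<Psi> \<psi>\<phi> L hML])
  have Tsub: "subspace T" unfolding Teq
    by (rule linear_subspace_image[OF _ L]) (simp add: blinfun.bounded_linear_right bounded_linear.linear)
  have "\<exists>r>0. \<forall>x\<in>M \<inter> ball xbar r. \<forall>y\<in>M \<inter> ball xbar r.
            (\<forall>w\<in>L. inner (x - y) (\<Psi> (\<phi> xbar) w) = 0) \<longrightarrow> x = y"
    by (rule secant[OF U V a0V d\<Phi> c\<Phi> d\<Psi> c\<Psi> \<psi>\<phi> hML L])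
  then obtain r where r: "r > 0" and sec0: "\<forall>x\<in>M \<inter> ball xbar r. \<forall>y\<in>M \<inter> ball xbar r.
            (\<forall>w\<in>L. inner (x - y) (\<Psi> (\<phi> xbar) w) = 0) \<longrightarrow> x = y" by blast
  have sec: "x = y" if "x \<in> M \<inter> ball xbar r" "y \<in> M \<inter> ball xbar r"
      "\<forall>w\<in>L. inner (x - y) (\<Psi> (\<phi> xbar) w) = 0" for x y
    using sec0 that by blast
  obtain \<delta>0 where \<delta>0: "\<delta>0 > 0" and sep0: "\<forall>y. dist y xbar < \<delta>0 \<longrightarrow> (\<forall>i j. y $ i = y $ j \<longrightarrow> xbar $ i = xbar $ j)"
    using near_sep[of xbar] by blast
  have sep: "xbar $ i = xbar $ j" if "dist y xbar < \<delta>0" "y $ i = y $ j" for y i j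
    using sep0 that by blast
  define \<pi> where "\<pi> x = proj_tangent M xbar x" for x
  have \<pi>def: "\<pi> x = closest_point ((\<lambda>v. xbar + v) ` T) x" for x
    by (simp add: \<pi>_def proj_tangent_def T_def)
  define \<delta> where "\<delta> = min \<delta>0 (min \<delta>1 r)"
  have \<delta>: "\<delta> > 0" using \<delta>0 \<delta>1 r by (simp add: \<delta>_def)
  show ?thesis
  proof (intro exI[of _ \<delta>] conjI \<delta> ballI)
    fix x assume x: "x \<in> M \<inter> ball xbar \<delta>"
    have dx: "dist x xbar < \<delta>" using x by (simp add: dist_commute)
    have key: "x $ i = x $ j \<longleftrightarrow> \<pi> x $ i = \<pi> x $ j" for i j
    proof -
      define A where "A = perm_act (Transposition.transpose i j)"
      have Alin: "linear A" unfolding A_def by (rule linear_perm_act)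
      have Abl: "bounded_linear A" unfolding A_def by (rule bounded_linear_perm_act)
      have An: "norm (A z) = norm z" for z unfolding A_def by (rule norm_perm_act[OF transpose_permutes_UNIV])
      have AA: "A (A z) = z" for z unfolding A_def by (rule perm_act_transpose_invol)
      have Afix: "A z = z \<longleftrightarrow> z $ i = z $ j" for z unfolding A_def by (rule perm_act_transpose_fix)
      have stuff: "A xbar = xbar \<and> (\<forall>y \<in> M \<inter> ball xbar \<delta>1. A y \<in> M \<inter> ball xbar \<delta>1) \<and>
          (\<forall>z. \<pi> (A z) = A (\<pi> z))" if xij: "xbar $ i = xbar $ j"
      proof -
        have Ax: "A xbar = xbar" using Afix xij by simp
        have img: "A ` (M \<inter> ball xbar \<delta>1) = M \<inter> ball xbar \<delta>1"
          unfolding A_def by (rule sym[OF _ transpose_permutes_UNIV]) (use xM \<delta>1 Ax A_def in auto)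
        have AM: "\<forall>y \<in> M \<inter> ball xbar \<delta>1. A y \<in> M \<inter> ball xbar \<delta>1" using img by blast
        have AT: "A t \<in> T" if "t \<in> T" for t
          unfolding T_def by (rule tangent_invariant[OF Abl \<delta>1 Ax]) (use AM that T_def in auto)
        have "\<pi> (A z) = A (\<pi> z)" for z
          unfolding \<pi>def by (rule cp_comm[OF Tsub Alin An Ax AT AA])
        then show ?thesis using Ax AM by blast
      qed
      show ?thesis
      proof
        assume xij: "x $ i = x $ j"
        have "xbar $ i = xbar $ j" using sep[OF _ xij] dx by (simp add: \<delta>_def)
        then have "\<pi> (A x) = A (\<pi> x)" using stuff by blast
        moreover have "A x = x" using Afix xij by simp
        ultimately have "A (\<pi> x) = \<pi> x" by simp
        then show "\<pi> x $ i = \<pi> x $ j" using Afix by simp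
      next
        assume pij: "\<pi> x $ i = \<pi> x $ j"
        have "dist (\<pi> x) xbar \<le> dist x xbar" unfolding \<pi>def by (rule cp_lip[OF Tsub])
        then have "dist (\<pi> x) xbar < \<delta>0" using dx by (simp add: \<delta>_def)
        then have xij: "xbar $ i = xbar $ j" using sep[OF _ pij] by simp
        then have Ax: "A xbar = xbar" and AM: "\<forall>y \<in> M \<inter> ball xbar \<delta>1. A y \<in> M \<inter> ball xbar \<delta>1"
          and Acomm: "\<And>z. \<pi> (A z) = A (\<pi> z)" using stuff by blast+
        have Api: "A (\<pi> x) = \<pi> x" using Afix pij by simp
        have xb1: "x \<in> M \<inter> ball xbar \<delta>1" using x by (auto simp: \<delta>_def)
        have AxM: "A x \<in> M" using AM xb1 by blast
        have "dist (A x) xbar = dist x xbar"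
        proof -
          have "dist (A x) xbar = norm (A x - A xbar)" using Ax by (simp add: dist_norm)
          also have "\<dots> = norm (A (x - xbar))" by (simp add: linear_diff[OF Alin])
          also have "\<dots> = dist x xbar" by (simp add: An dist_norm)
          finally show ?thesis .
        qed
        then have Axr: "A x \<in> M \<inter> ball xbar r" using AxM dx by (auto simp: \<delta>_def dist_commute)
        have xr: "x \<in> M \<inter> ball xbar r" using x by (auto simp: \<delta>_def)
        have "x = A x"
        proof (rule sec[OF xr Axr], rule ballI)
          fix w assume "w \<in> L"
          then have tT: "\<Psi> (\<phi> xbar) w \<in> T" unfolding Teq by blast
          have o1: "inner (x - \<pi> x) (\<Psi> (\<phi> xbar) w) = 0" unfolding \<pi>def by (rule cp_orth[OF Tsub tT])
          have o2: "inner (A x - \<pi> (A x)) (\<Psi> (\<phi> xbar) w) = 0" unfolding \<pi>def by (rule cp_orth[OF Tsub tT])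
          have "\<pi> (A x) = \<pi> x" using Acomm Api by simp
          then show "inner (x - A x) (\<Psi> (\<phi> xbar) w) = 0" using o1 o2
            by (simp add: inner_diff_left)
        qed
        then show "x $ i = x $ j" using Afix[of x] by metis
      qed
    qed
    define \<sigma>' where "\<sigma>' = nxt (\<lambda>i. x $ i)"
    have pp: "perm_partition \<sigma>' = vec_partition x" unfolding \<sigma>'_def by (rule perm_partition_nxt)
    show "\<exists>\<sigma>'. \<sigma>' permutes UNIV \<and> refines (perm_partition \<sigma>') (perm_partition \<sigma>) \<and>
           x \<in> Delta \<sigma>' \<and> proj_tangent M xbar x \<in> Delta \<sigma>'"
    proof (intro exI[of _ \<sigma>'] conjI)
      show "\<sigma>' permutes UNIV" unfolding \<sigma>'_def by (rule nxt_permutes)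
      show "refines (perm_partition \<sigma>') (perm_partition \<sigma>)"
        unfolding pp xD[symmetric]
      proof (rule refines_vec)
        fix i j assume "x $ i = x $ j"
        moreover have "dist x xbar < \<delta>0" using dx by (simp add: \<delta>_def)
        ultimately show "xbar $ i = xbar $ j" using sep by blast
      qed
      show "x \<in> Delta \<sigma>'" by (simp add: Delta_def pp)
      have "vec_partition (\<pi> x) = vec_partition x" by (rule vec_partition_eq) (use key in auto)
      then show "proj_tangent M xbar x \<in> Delta \<sigma>'" by (simp add: Delta_def pp \<pi>_def)
    qed
  qed
qed

end
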